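(* Let $w_0>0$, $\theta\in\mathbb{R}$ and $\alpha_{\max}>0$. With the inner product $\langle x,y\rangle=\frac{w_0}{2\pi}\int_{-\pi/w_0}^{\pi/w_0}x(t)y(t)\,dt$ and $\psi_1(t)=\frac{3\sqrt5}{2\pi^2}w_0^2t^2-\frac{\sqrt5}{2}$, $\psi_2(t)=\frac{\sqrt3}{\pi}w_0t$, for $\alpha\in[0,\alpha_{\max}]$ and $\phi\in[-\pi,\pi]$ let $s_{\alpha,\phi}(t)=\alpha\sin(w_0t+\phi+\theta)$, $a^*(\alpha,\phi)=\langle s_{\alpha,\phi},\psi_1\rangle$, $b^*(\alpha,\phi)=\langle s_{\alpha,\phi},\psi_2\rangle$. Then the set $\{(a^*(\alpha,\phi),b^*(\alpha,\phi)):\alpha\in[0,\alpha_{\max}],\ \phi\in[-\pi,\pi]\}$ is the filled elliptical region (ellipse together with its interior) bounded by the ellipse $\{(a^*(\alpha_{\max},\phi),b^*(\alpha_{\max},\phi)):\phi\in[-\pi,\pi]\}$, and for each fixed $\phi$ the Euclidean distance of $(a^*(\alpha,\phi),b^*(\alpha,\phi))$ from the origin (the center of this ellipse) is proportional to $\alpha$.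
   Context: $\psi_1,\psi_2$ together with $\psi_3=1$ are orthonormal for this inner product; $a^*,b^*$ are the least-squares coefficients of the signal on $\psi_1,\psi_2$. *)

theory Defs
  imports "HOL-Analysis.Analysis"
begin

definition ip :: "real \<Rightarrow> (real \<Rightarrow> real) \<Rightarrow> (real \<Rightarrow> real) \<Rightarrow> real" where
  "ip w0 x y = w0 / (2 * pi) * integral {-pi / w0 .. pi / w0} (\<lambda>t. x t * y t)"

definition psi1 :: "real \<Rightarrow> real \<Rightarrow> real" where
  "psi1 w0 t = 3 * sqrt 5 / (2 * pi^2) * w0^2 * t^2 - sqrt 5 / 2"

definition psi2 :: "real \<Rightarrow> real \<Rightarrow> real" where
  "psi2 w0 t = sqrt 3 / pi * w0 * t"

definition sig :: "real \<Rightarrow> real \<Rightarrow> real \<Rightarrow> real \<Rightarrow> real \<Rightarrow> real" where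
  "sig w0 \<theta> \<alpha> \<phi> t = \<alpha> * sin (w0 * t + \<phi> + \<theta>)"

definition astar :: "real \<Rightarrow> real \<Rightarrow> real \<Rightarrow> real \<Rightarrow> real" where
  "astar w0 \<theta> \<alpha> \<phi> = ip w0 (sig w0 \<theta> \<alpha> \<phi>) (psi1 w0)"

definition bstar :: "real \<Rightarrow> real \<Rightarrow> real \<Rightarrow> real \<Rightarrow> real" where
  "bstar w0 \<theta> \<alpha> \<phi> = ip w0 (sig w0 \<theta> \<alpha> \<phi>) (psi2 w0)"

end

theory Submission imports Defs begin

lemma endpts: assumes "w > 0" shows "sin (w * (pi/w) + c) = - sin c" "cos (w * (pi/w) + c) = - cos c"
  "sin (w * (-(pi/w)) + c) = - sin c" "cos (w * (-(pi/w)) + c) = - cos c"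
  using assms by (simp_all add: sin_add cos_add)

lemma int_t2: assumes "w > 0"
  shows "((\<lambda>t. t ^ 2 * sin (w*t+c)) has_integral (-4*pi *  sin c / w ^ 3)) {-pi/w..pi/w}"
proof -
  let ?F = "\<lambda>t. - (t ^ 2 * cos (w*t+c)/w) + 2*t* sin (w*t+c)/w ^ 2 + 2* cos(w*t+c)/w ^ 3"
  have d: "\<And>t. (?F has_vector_derivative t ^ 2 * sin (w*t+c)) (at t within {-pi/w..pi/w})"
    unfolding has_real_derivative_iff_has_vector_derivative[symmetric]
    using assms apply (auto intro!: derivative_eq_intros)
    apply (simp add: field_simps eval_nat_numeral)
    done
  have le: "-pi/w \<le> pi/w" using assms by (simp add: divide_le_eq_1 frac_le)
  have "((\<lambda>t. t ^ 2 * sin (w*t+c)) has_integral (?F (pi/w) - ?F (-pi/w))) {-pi/w..pi/w}"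
    by (rule fundamental_theorem_of_calculus[OF le]) (use d in blast)
  also have "?F (pi/w) - ?F (-pi/w) = -4*pi *  sin c / w ^ 3"
    using endpts[OF assms, of c] assms by (simp add: field_simps power2_eq_square power3_eq_cube)
  finally show ?thesis .
qed

lemma int_t1: assumes "w > 0"
  shows "((\<lambda>t. t * sin (w*t+c)) has_integral (2*pi *  cos c / w ^ 2)) {-pi/w..pi/w}"
proof -
  let ?F = "\<lambda>t. - (t * cos (w*t+c)/w) + sin (w*t+c)/w ^ 2"
  have d: "\<And>t. (?F has_vector_derivative t * sin (w*t+c)) (at t within {-pi/w..pi/w})"
    unfolding has_real_derivative_iff_has_vector_derivative[symmetric]
    using assms apply (auto intro!: derivative_eq_intros)
    apply (simp add: field_simps eval_nat_numeral)
    done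
  have le: "-pi/w \<le> pi/w" using assms by (simp add: divide_le_eq_1 frac_le)
  have "((\<lambda>t. t * sin (w*t+c)) has_integral (?F (pi/w) - ?F (-pi/w))) {-pi/w..pi/w}"
    by (rule fundamental_theorem_of_calculus[OF le]) (use d in blast)
  also have "?F (pi/w) - ?F (-pi/w) = 2*pi *  cos c / w ^ 2"
    using endpts[OF assms, of c] assms by (simp add: field_simps power2_eq_square)
  finally show ?thesis .
qed

lemma int_t0: assumes "w > 0"
  shows "((\<lambda>t. sin (w*t+c)) has_integral 0) {-pi/w..pi/w}"
proof -
  let ?F = "\<lambda>t. - cos (w*t+c)/w"
  have d: "\<And>t. (?F has_vector_derivative sin (w*t+c)) (at t within {-pi/w..pi/w})"
    unfolding has_real_derivative_iff_has_vector_derivative[symmetric]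
    using assms by (auto intro!: derivative_eq_intros)
  have le: "-pi/w \<le> pi/w" using assms by (simp add: divide_le_eq_1 frac_le)
  have "((\<lambda>t. sin (w*t+c)) has_integral (?F (pi/w) - ?F (-pi/w))) {-pi/w..pi/w}"
    by (rule fundamental_theorem_of_calculus[OF le]) (use d in blast)
  also have "?F (pi/w) - ?F (-pi/w) = 0"
    using endpts[OF assms, of c] assms by (simp add: field_simps)
  finally show ?thesis .
qed

lemma astar_eq: fixes w0 \<theta> \<alpha> \<phi> :: real assumes "w0 > 0"
  shows "astar w0 \<theta> \<alpha> \<phi> = - (3* sqrt 5/pi ^ 2) * \<alpha> * sin (\<phi>+\<theta>)"
proof -
  let ?c = "\<phi>+\<theta>"
  have "((\<lambda>t. (\<alpha> * (3 * sqrt 5 / (2 * pi ^ 2) * w0 ^ 2)) * (t ^ 2 * sin (w0*t+?c)) - (\<alpha> * (sqrt 5 / 2)) * sin (w0*t+?c))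
     has_integral ((\<alpha> * (3 * sqrt 5 / (2 * pi ^ 2) * w0 ^ 2)) * (-4*pi *  sin ?c / w0 ^ 3) - (\<alpha> * (sqrt 5 / 2)) * 0)) {-pi/w0..pi/w0}"
    by (intro has_integral_diff has_integral_mult_right int_t2 int_t0 assms)
  moreover have "(\<lambda>t. (\<alpha> * (3 * sqrt 5 / (2 * pi ^ 2) * w0 ^ 2)) * (t ^ 2 * sin (w0*t+?c)) - (\<alpha> * (sqrt 5 / 2)) * sin (w0*t+?c))
     = (\<lambda>t. sig w0 \<theta> \<alpha> \<phi> t * psi1 w0 t)"
    by (rule ext) (simp add: sig_def psi1_def algebra_simps)
  ultimately have "integral {-pi/w0..pi/w0} (\<lambda>t. sig w0 \<theta> \<alpha> \<phi> t * psi1 w0 t) = 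
      (\<alpha> * (3 * sqrt 5 / (2 * pi ^ 2) * w0 ^ 2)) * (-4*pi *  sin ?c / w0 ^ 3)"
    by (metis (no_types, lifting) integral_unique mult_zero_right diff_zero)
  then show ?thesis using assms unfolding astar_def ip_def
    by (simp add: field_simps power2_eq_square power3_eq_cube)
qed

lemma bstar_eq: fixes w0 \<theta> \<alpha> \<phi> :: real assumes "w0 > 0"
  shows "bstar w0 \<theta> \<alpha> \<phi> = (sqrt 3/pi) * \<alpha> * cos (\<phi>+\<theta>)"
proof -
  let ?c = "\<phi>+\<theta>"
  have "((\<lambda>t. (\<alpha> * (sqrt 3 / pi * w0)) * (t * sin (w0*t+?c)))
     has_integral ((\<alpha> * (sqrt 3 / pi * w0)) * (2*pi *  cos ?c / w0 ^ 2))) {-pi/w0..pi/w0}"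
    by (intro has_integral_mult_right int_t1 assms)
  moreover have "(\<lambda>t. (\<alpha> * (sqrt 3 / pi * w0)) * (t * sin (w0*t+?c)))
     = (\<lambda>t. sig w0 \<theta> \<alpha> \<phi> t * psi2 w0 t)"
    by (rule ext) (simp add: sig_def psi2_def algebra_simps)
  ultimately have "integral {-pi/w0..pi/w0} (\<lambda>t. sig w0 \<theta> \<alpha> \<phi> t * psi2 w0 t) = 
      (\<alpha> * (sqrt 3 / pi * w0)) * (2*pi *  cos ?c / w0 ^ 2)"
    by (metis integral_unique)
  then show ?thesis using assms unfolding bstar_def ip_def
    by (simp add: field_simps power2_eq_square)
qed


lemma angle_exists:
  fixes u v \<theta> :: real assumes "u^2 + v^2 = 1"
  shows "\<exists>\<phi>\<in>{-pi..pi}. sin (\<phi>+\<theta>) = u \<and> cos (\<phi>+\<theta>) = v"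
proof -
  obtain t where t: "v = cos t" "u = sin t"
    using sincos_total_2pi[of v u] assms by (metis add.commute)
  define n where "n = \<lfloor>(t - \<theta> + pi)/(2 * pi)\<rfloor>"
  define \<phi> where "\<phi> = t - \<theta> - 2 * pi * of_int n"
  have a: "of_int n \<le> (t - \<theta> + pi)/(2 * pi)" "(t - \<theta> + pi)/(2 * pi) < of_int n + 1"
    unfolding n_def by linarith+
  have "2 * pi * of_int n \<le> t - \<theta> + pi" using a(1) pi_gt_zero by (simp add: field_simps)
  moreover have "t - \<theta> + pi < 2 * pi * (of_int n + 1)" using a(2) pi_gt_zero by (simp add: field_simps)
  ultimately have "\<phi> \<in> {-pi..pi}" unfolding \<phi>_def by (simp add: algebra_simps)
  moreover have "\<phi> + \<theta> = t - 2 * pi * of_int n" unfolding \<phi>_def by simp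
  ultimately show ?thesis using t
    by (intro bexI[of _ \<phi>]) (simp_all add: sin_diff cos_diff)
qed

theorem corollary2:
  fixes w0 \<theta> \<alpha>max :: real
  assumes "w0 > 0" and "\<alpha>max > 0"
  shows "(\<exists>p q r :: real. p > 0 \<and> p * r - q^2 > 0 \<and>
     {(astar w0 \<theta> \<alpha>max \<phi>, bstar w0 \<theta> \<alpha>max \<phi>) | \<phi>. \<phi> \<in> {-pi..pi}}
       = {(x, y). p * x^2 + 2 * q * x * y + r * y^2 = 1} \<and>
     {(astar w0 \<theta> \<alpha> \<phi>, bstar w0 \<theta> \<alpha> \<phi>) | \<alpha> \<phi>. \<alpha> \<in> {0..\<alpha>max} \<and> \<phi> \<in> {-pi..pi}}
       = {(x, y). p * x^2 + 2 * q * x * y + r * y^2 \<le> 1}) \<and>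
    (\<forall>\<phi> \<in> {-pi..pi}. \<exists>k > 0. \<forall>\<alpha> \<in> {0..\<alpha>max}.
       norm (astar w0 \<theta> \<alpha> \<phi>, bstar w0 \<theta> \<alpha> \<phi>) = k * \<alpha>)"
proof -
  define K1 where "K1 = 3 * sqrt 5/pi ^ 2"
  define K2 where "K2 = sqrt 3/pi"
  have K1: "K1 > 0" unfolding K1_def by simp
  have K2: "K2 > 0" unfolding K2_def by simp
  have A: "\<And>\<alpha> \<phi>. astar w0 \<theta> \<alpha> \<phi> = - K1 * \<alpha> * sin (\<phi>+\<theta>)"
    using astar_eq[OF assms(1)] unfolding K1_def by simp
  have B: "\<And>\<alpha> \<phi>. bstar w0 \<theta> \<alpha> \<phi> = K2 * \<alpha> * cos (\<phi>+\<theta>)"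
    using bstar_eq[OF assms(1)] unfolding K2_def by simp
  define p where "p = 1/(K1*\<alpha>max)^2"
  define r where "r = 1/(K2*\<alpha>max)^2"
  have p: "p > 0" unfolding p_def using K1 assms by simp
  have r: "r > 0" unfolding r_def using K2 assms by simp
  have Q: "\<And>\<alpha> \<phi>. p * (astar w0 \<theta> \<alpha> \<phi>)^2 + r * (bstar w0 \<theta> \<alpha> \<phi>)^2 = (\<alpha>/\<alpha>max)^2"
  proof -
    fix \<alpha> \<phi>
    have "p * (astar w0 \<theta> \<alpha> \<phi>)^2 + r * (bstar w0 \<theta> \<alpha> \<phi>)^2
       = (\<alpha>/\<alpha>max)^2 * ((sin (\<phi>+\<theta>))^2 + (cos (\<phi>+\<theta>))^2)"
      unfolding A B p_def r_def using K1 K2 assms(2)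
      by (simp add: field_simps power2_eq_square) (metis (no_types, lifting) mult_1_right distrib_left sin_cos_squared_add power2_eq_square add.commute)
    then show "p * (astar w0 \<theta> \<alpha> \<phi>)^2 + r * (bstar w0 \<theta> \<alpha> \<phi>)^2 = (\<alpha>/\<alpha>max)^2" by simp
  qed
  have hit: "\<exists>\<phi>\<in>{-pi..pi}. astar w0 \<theta> \<alpha> \<phi> = x \<and> bstar w0 \<theta> \<alpha> \<phi> = y"
    if "\<alpha> > 0" "p * x^2 + r * y^2 = (\<alpha>/\<alpha>max)^2" for x y \<alpha>
  proof -
    have "(- x/(K1*\<alpha>))^2 + (y/(K2*\<alpha>))^2 = 1"
    proof -
      have "(- x/(K1*\<alpha>))^2 + (y/(K2*\<alpha>))^2 = (p * x^2 + r * y^2) * (\<alpha>max/\<alpha>)^2"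
        unfolding p_def r_def using K1 K2 assms(2) that(1)
        by (simp add: field_simps power2_eq_square)
      also have "\<dots> = 1" using that assms(2) by (simp add: field_simps power2_eq_square)
      finally show ?thesis .
    qed
    then obtain \<phi> where \<phi>: "\<phi>\<in>{-pi..pi}" "sin (\<phi>+\<theta>) = - x/(K1*\<alpha>)" "cos (\<phi>+\<theta>) = y/(K2*\<alpha>)"
      using angle_exists by blast
    show ?thesis using \<phi> K1 K2 that(1) unfolding A B by (intro bexI[of _ \<phi>]) auto
  qed
  have S1: "{(astar w0 \<theta> \<alpha>max \<phi>, bstar w0 \<theta> \<alpha>max \<phi>) | \<phi>. \<phi> \<in> {-pi..pi}}
       = {(x, y). p * x^2 + 2 * 0 * x * y + r * y^2 = 1}"
  proof (rule set_eqI, rule iffI)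
    fix z assume "z \<in> {(astar w0 \<theta> \<alpha>max \<phi>, bstar w0 \<theta> \<alpha>max \<phi>) | \<phi>. \<phi> \<in> {-pi..pi}}"
    then show "z \<in> {(x, y). p * x^2 + 2 * 0 * x * y + r * y^2 = 1}"
      using Q assms(2) by auto
  next
    fix z assume "z \<in> {(x, y). p * x^2 + 2 * 0 * x * y + r * y^2 = 1}"
    then obtain x y where z: "z = (x,y)" "p * x^2 + r * y^2 = (\<alpha>max/\<alpha>max)^2"
      using assms(2) by auto
    then show "z \<in> {(astar w0 \<theta> \<alpha>max \<phi>, bstar w0 \<theta> \<alpha>max \<phi>) | \<phi>. \<phi> \<in> {-pi..pi}}"
      using hit[OF assms(2) z(2)] by auto
  qed
  have S2: "{(astar w0 \<theta> \<alpha> \<phi>, bstar w0 \<theta> \<alpha> \<phi>) | \<alpha> \<phi>. \<alpha> \<in> {0..\<alpha>max} \<and> \<phi> \<in> {-pi..pi}}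
       = {(x, y). p * x^2 + 2 * 0 * x * y + r * y^2 \<le> 1}"
  proof (rule set_eqI, rule iffI)
    fix z assume "z \<in> {(astar w0 \<theta> \<alpha> \<phi>, bstar w0 \<theta> \<alpha> \<phi>) | \<alpha> \<phi>. \<alpha> \<in> {0..\<alpha>max} \<and> \<phi> \<in> {-pi..pi}}"
    then obtain \<alpha> \<phi> where a: "\<alpha> \<in> {0..\<alpha>max}" "z = (astar w0 \<theta> \<alpha> \<phi>, bstar w0 \<theta> \<alpha> \<phi>)" by blast
    have "(\<alpha>/\<alpha>max)^2 \<le> 1" using a(1) assms(2) by (simp add: power_le_one)
    then show "z \<in> {(x, y). p * x^2 + 2 * 0 * x * y + r * y^2 \<le> 1}"
      using Q a(2) by auto
  next
    fix z assume "z \<in> {(x, y). p * x^2 + 2 * 0 * x * y + r * y^2 \<le> 1}"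
    then obtain x y where z: "z = (x,y)" "p * x^2 + r * y^2 \<le> 1" by auto
    define \<rho> where "\<rho> = sqrt (p * x^2 + r * y^2)"
    have nn: "p * x^2 + r * y^2 \<ge> 0" using p r by (simp add: add_nonneg_nonneg)
    show "z \<in> {(astar w0 \<theta> \<alpha> \<phi>, bstar w0 \<theta> \<alpha> \<phi>) | \<alpha> \<phi>. \<alpha> \<in> {0..\<alpha>max} \<and> \<phi> \<in> {-pi..pi}}"
    proof (cases "\<rho> = 0")
      case True
      then have "p * x^2 + r * y^2 = 0" unfolding \<rho>_def using nn by simp
      then have "x = 0" "y = 0" using p r
        by (smt (verit) mult_pos_pos zero_less_power2 zero_le_power2 mult_nonneg_nonneg)+
      then have "z = (astar w0 \<theta> 0 0, bstar w0 \<theta> 0 0)" using z unfolding A B by simp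
      then show ?thesis using assms(2) by force
    next
      case False
      have r0: "\<rho> > 0" using False nn unfolding \<rho>_def by simp
      have r1: "\<rho> \<le> 1" unfolding \<rho>_def using z(2) by simp
      have eq: "p * x^2 + r * y^2 = ((\<alpha>max*\<rho>)/\<alpha>max)^2" unfolding \<rho>_def using nn assms(2) by simp
      obtain \<phi> where "\<phi>\<in>{-pi..pi}" "astar w0 \<theta> (\<alpha>max*\<rho>) \<phi> = x" "bstar w0 \<theta> (\<alpha>max*\<rho>) \<phi> = y"
        using hit[OF _ eq] r0 assms(2) by auto
      moreover have "\<alpha>max*\<rho> \<in> {0..\<alpha>max}" using r0 r1 assms(2) by (simp add: mult_left_le)
      ultimately show ?thesis using z(1) by blast
    qed
  qed
  have N: "\<exists>k > 0. \<forall>\<alpha> \<in> {0..\<alpha>max}. norm (astar w0 \<theta> \<alpha> \<phi>, bstar w0 \<theta> \<alpha> \<phi>) = k * \<alpha>" for \<phi>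
  proof -
    define k where "k = sqrt ((K1 * sin (\<phi>+\<theta>))^2 + (K2 * cos (\<phi>+\<theta>))^2)"
    have "(K1 * sin (\<phi>+\<theta>))^2 + (K2 * cos (\<phi>+\<theta>))^2 > 0"
    proof (cases "sin (\<phi>+\<theta>) = 0")
      case True
      then have "cos (\<phi>+\<theta>) \<noteq> 0" using sin_cos_squared_add[of "\<phi>+\<theta>"] by auto
      then show ?thesis using K2 by (simp add: add_nonneg_pos)
    next
      case False
      then show ?thesis using K1 by (simp add: add_pos_nonneg)
    qed
    then have k: "k > 0" unfolding k_def by simp
    have "norm (astar w0 \<theta> \<alpha> \<phi>, bstar w0 \<theta> \<alpha> \<phi>) = k * \<alpha>" if "\<alpha> \<in> {0..\<alpha>max}" for \<alpha>
    proof -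
      have "norm (astar w0 \<theta> \<alpha> \<phi>, bstar w0 \<theta> \<alpha> \<phi>) = sqrt (\<alpha>^2 * ((K1 * sin (\<phi>+\<theta>))^2 + (K2 * cos (\<phi>+\<theta>))^2))"
        unfolding norm_Pair A B by (simp add: power_mult_distrib algebra_simps)
      also have "\<dots> = \<alpha> * k" unfolding k_def using that by (simp add: real_sqrt_mult)
      finally show ?thesis by simp
    qed
    then show ?thesis using k by blast
  qed
  have "p * r - 0^2 > 0" using p r by simp
  then show ?thesis using p S1 S2 N by blast
qed

end
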